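(* Under Assumptions 1–2, assume $r_\ell<\min\{m_\ell,n_\ell\}$ for all $\ell$ and $\Delta>0$. Let $T$ be an integer with $T\ge 64/(3\underline{\delta})$ and choose $\beta_1=1$, $\tau=\lceil 64/(3\underline{\delta}\beta_1)\rceil$, and $\eta=\Big(4L+\sqrt{\tfrac{80L^2}{3\underline{\delta}\beta_1^2}}+\sqrt{\tfrac{80\tau^2L^2}{3\underline{\delta}}}+\sqrt{\tfrac{16\tau L^2}{3\beta_1}}\Big)^{-1}$. Then GaLore using deterministic gradients and MSGD with momentum projection satisfies $\frac1T\sum_{t=0}^{T-1}\|\nabla f(x^{(t)})\|_2^2\le C\,\frac{L\Delta}{\underline{\delta}^{5/2}T}$ for an absolute constant $C$.
   Context: Parameters $x=(\mathrm{vec}(X_1)^\top,\dots,\mathrm{vec}(X_{N_L})^\top)^\top\in\mathbb{R}^d$, $X_\ell\in\mathbb{R}^{m_\ell\times n_\ell}$; $\nabla_\ell$ is the gradient w.r.t. $X_\ell$. Assumption 1: $\inf f>-\infty$. Assumption 2: $\nabla f$ is $L$-Lipschitz in $\|\cdot\|_2$. $\Delta=f(x^{(0)})-\inf_x f(x)$, $\delta_\ell=r_\ell/\min\{m_\ell,n_\ell\}$, $\underline\delta=\min_\ell\delta_\ell$. Algorithm (GaLore/GoLore with MSGD and momentum projection, "MP"): inputs $x^{(0)}$, $\eta>0$, integer $\tau\ge1$, $\beta_1\in(0,1]$, ranks $r_\ell$; $M_\ell^{(-1)}=0$. For $t=0,\dots,T-1$ and each $\ell$: obtain a gradient matrix $G_\ell^{(t)}$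 (variant-dependent). If $t\equiv0\pmod\tau$, choose new $P_\ell^{(t)}\in\mathbb{R}^{m_\ell\times r_\ell}$, $Q_\ell^{(t)}\in\mathbb{R}^{n_\ell\times r_\ell}$: in GaLore take an SVD $G_\ell^{(t)}=U\Sigma V^\top$ (singular values nonincreasing) and $P_\ell^{(t)}=U[:,:r_\ell]$, $Q_\ell^{(t)}=V[:,:r_\ell]$; in GoLore sample $P_\ell^{(t)}$, $Q_\ell^{(t)}$ uniformly (Haar) from the Stiefel manifolds $\mathrm{St}_{m_\ell,r_\ell}$, $\mathrm{St}_{n_\ell,r_\ell}$ (where $\mathrm{St}_{m,r}=\{P\in\mathbb{R}^{m\times r}:P^\top P=I_r\}$), independently of everything else. Otherwise $P_\ell^{(t)}=P_\ell^{(t-1)}$, $Q_\ell^{(t)}=Q_\ell^{(t-1)}$. If $m_\ell\le n_\ell$: $M_\ell^{(t)}=(1-\beta_1)(P_\ell^{(t)})^\top P_\ell^{(t-1)}M_\ell^{(t-1)}+\beta_1(P_\ell^{(t)})^\top G_\ell^{(t)}$ and $X_\ell^{(t+1)}=X_\ell^{(t)}-\eta P_\ell^{(t)}M_\ell^{(t)}$. If $m_\ell>n_\ell$: $M_\ell^{(t)}=(1-\beta_1)M_\ell^{(t-1)}(Q_\ell^{(t-1)})^\top Q_\ell^{(t)}+\beta_1G_\ell^{(t)}Q_\ell^{(t)}$ and $X_\ell^{(t+1)}=X_\ell^{(t)}-\eta M_\ell^{(t)}(Q_\ell^{(t)})^\top$. (At $t=0$ the term involving $M^{(-1)}=0$ vanishes.)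 Deterministic variant: $G_\ell^{(t)}=\nabla_\ell f(x^{(t)})$ for all $t$, with GaLore projections. *)

theory Defs
  imports Complex_Main
begin

text \<open>Parameters x = (X_1,...,X_{N_L}) are stored as arrays indexed by (layer, row, column);
  only the entries with layer < NL, row < m l, column < n l are meaningful, all other
  entries are required to be 0.  Matrices are functions nat => nat => real with explicit
  dimensions; all sums only range over in-bound indices.\<close>

type_synonym arr = "nat \<Rightarrow> nat \<Rightarrow> nat \<Rightarrow> real"
type_synonym matr = "nat \<Rightarrow> nat \<Rightarrow> real"

definition idxs :: "nat \<Rightarrow> (nat \<Rightarrow> nat) \<Rightarrow> (nat \<Rightarrow> nat) \<Rightarrow> (nat \<times> nat \<times> nat) set" where
  "idxs NL m n = {(l, a, b). l < NL \<and> a < m l \<and> b < n l}"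

definition pspace :: "nat \<Rightarrow> (nat \<Rightarrow> nat) \<Rightarrow> (nat \<Rightarrow> nat) \<Rightarrow> arr set" where
  "pspace NL m n = {x. \<forall>l a b. (l, a, b) \<notin> idxs NL m n \<longrightarrow> x l a b = 0}"

definition ip :: "nat \<Rightarrow> (nat \<Rightarrow> nat) \<Rightarrow> (nat \<Rightarrow> nat) \<Rightarrow> arr \<Rightarrow> arr \<Rightarrow> real" where
  "ip NL m n x y = (\<Sum>(l, a, b)\<in>idxs NL m n. x l a b * y l a b)"

definition l2norm :: "nat \<Rightarrow> (nat \<Rightarrow> nat) \<Rightarrow> (nat \<Rightarrow> nat) \<Rightarrow> arr \<Rightarrow> real" where
  "l2norm NL m n x = sqrt (ip NL m n x x)"

definition arr_add :: "arr \<Rightarrow> arr \<Rightarrow> arr" where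
  "arr_add x y = (\<lambda>l a b. x l a b + y l a b)"

definition arr_diff :: "arr \<Rightarrow> arr \<Rightarrow> arr" where
  "arr_diff x y = (\<lambda>l a b. x l a b - y l a b)"

definition has_grad :: "nat \<Rightarrow> (nat \<Rightarrow> nat) \<Rightarrow> (nat \<Rightarrow> nat) \<Rightarrow> (arr \<Rightarrow> real) \<Rightarrow> arr \<Rightarrow> arr \<Rightarrow> bool" where
  "has_grad NL m n f g x \<longleftrightarrow> g \<in> pspace NL m n \<and>
     (\<forall>\<epsilon>>0. \<exists>\<rho>>0. \<forall>h\<in>pspace NL m n. 0 < l2norm NL m n h \<and> l2norm NL m n h < \<rho> \<longrightarrow>
        \<bar>f (arr_add x h) - f x - ip NL m n g h\<bar> \<le> \<epsilon> * l2norm NL m n h)"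

definition is_svd :: "nat \<Rightarrow> nat \<Rightarrow> matr \<Rightarrow> matr \<Rightarrow> matr \<Rightarrow> matr \<Rightarrow> bool" where
  "is_svd mm nn G U S V \<longleftrightarrow>
     (\<forall>i<mm. \<forall>j<mm. (\<Sum>k<mm. U k i * U k j) = (if i = j then 1 else 0)) \<and>
     (\<forall>i<nn. \<forall>j<nn. (\<Sum>k<nn. V k i * V k j) = (if i = j then 1 else 0)) \<and>
     (\<forall>i<mm. \<forall>j<nn. i \<noteq> j \<longrightarrow> S i j = 0) \<and>
     (\<forall>i<min mm nn. 0 \<le> S i i) \<and>
     (\<forall>i j. i \<le> j \<and> j < min mm nn \<longrightarrow> S j j \<le> S i i) \<and>
     (\<forall>a<mm. \<forall>b<nn. G a b = (\<Sum>i<mm. \<Sum>j<nn. U a i * S i j * V b j))"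

definition layer :: "arr \<Rightarrow> nat \<Rightarrow> matr" where
  "layer g l = (\<lambda>a b. g l a b)"

text \<open>Deterministic GaLore with MSGD and momentum projection (MP).
  x t: iterates; P t l, Q t l: projection matrices; M t l: momentum; grad: gradient map.\<close>
definition galore_det_mp ::
  "nat \<Rightarrow> (nat \<Rightarrow> nat) \<Rightarrow> (nat \<Rightarrow> nat) \<Rightarrow> (nat \<Rightarrow> nat) \<Rightarrow> (arr \<Rightarrow> arr) \<Rightarrow>
   real \<Rightarrow> nat \<Rightarrow> real \<Rightarrow>
   (nat \<Rightarrow> arr) \<Rightarrow> (nat \<Rightarrow> nat \<Rightarrow> matr) \<Rightarrow> (nat \<Rightarrow> nat \<Rightarrow> matr) \<Rightarrow> (nat \<Rightarrow> nat \<Rightarrow> matr) \<Rightarrow> bool" where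
  "galore_det_mp NL m n r grad \<eta> \<tau> \<beta> x P Q M \<longleftrightarrow>
    (\<forall>t. x t \<in> pspace NL m n) \<and>
    (\<forall>t. \<forall>l<NL. let G = layer (grad (x t)) l in
       (if t mod \<tau> = 0 then
          (\<exists>U S V. is_svd (m l) (n l) G U S V \<and>
             (\<forall>a<m l. \<forall>i<r l. P t l a i = U a i) \<and>
             (\<forall>b<n l. \<forall>i<r l. Q t l b i = V b i))
        else
          (\<forall>a<m l. \<forall>i<r l. P t l a i = P (t - 1) l a i) \<and>
          (\<forall>b<n l. \<forall>i<r l. Q t l b i = Q (t - 1) l b i)) \<and>
       (if m l \<le> n l then
          (\<forall>i<r l. \<forall>b<n l. M t l i b =
              (if t = 0 then 0 else
                 (1 - \<beta>) * (\<Sum>p<r l. (\<Sum>a<m l. P t l a i * P (t - 1) l a p) * M (t - 1) l p b))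
              + \<beta> * (\<Sum>a<m l. P t l a i * G a b)) \<and>
          (\<forall>a<m l. \<forall>b<n l. x (Suc t) l a b = x t l a b - \<eta> * (\<Sum>i<r l. P t l a i * M t l i b))
        else
          (\<forall>a<m l. \<forall>i<r l. M t l a i =
              (if t = 0 then 0 else
                 (1 - \<beta>) * (\<Sum>j<r l. M (t - 1) l a j * (\<Sum>b<n l. Q (t - 1) l b j * Q t l b i)))
              + \<beta> * (\<Sum>b<n l. G a b * Q t l b i)) \<and>
          (\<forall>a<m l. \<forall>b<n l. x (Suc t) l a b = x t l a b - \<eta> * (\<Sum>i<r l. M t l a i * Q t l b i))))"

definition delta_min :: "nat \<Rightarrow> (nat \<Rightarrow> nat) \<Rightarrow> (nat \<Rightarrow> nat) \<Rightarrow> (nat \<Rightarrow> nat) \<Rightarrow> real" where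
  "delta_min NL m n r = Min ((\<lambda>l. real (r l) / real (min (m l) (n l))) ` {..<NL})"

end

theory Submission
  imports Defs "HOL-Analysis.L2_Norm"
begin


definition sc :: "real \<Rightarrow> arr \<Rightarrow> arr" where
  "sc c x = (\<lambda>l a b. c * x l a b)"

lemma idxs_Sigma: "idxs NL m n = (SIGMA l:{..<NL}. SIGMA a:{..<m l}. {..<n l})"
  by (auto simp: idxs_def)

lemma finite_idxs[simp]: "finite (idxs NL m n)"
  by (simp add: idxs_Sigma)

lemma ip_nested: "ip NL m n x y = (\<Sum>l<NL. \<Sum>a<m l. \<Sum>b<n l. x l a b * y l a b)"
  unfolding ip_def idxs_Sigma
  by (simp add: sum.Sigma split_def)

lemma l2norm_L2: "l2norm NL m n x = L2_set (\<lambda>(l,a,b). x l a b) (idxs NL m n)"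
  unfolding l2norm_def L2_set_def ip_def
  by (simp add: power2_eq_square split_def)

lemma ip_self_nonneg: "0 \<le> ip NL m n x x"
  unfolding ip_def by (intro sum_nonneg) (simp add: case_prod_beta)

lemma l2norm_nonneg[simp]: "0 \<le> l2norm NL m n x"
  by (simp add: l2norm_def ip_self_nonneg)

lemma l2norm_sq: "(l2norm NL m n x)\<^sup>2 = ip NL m n x x"
  by (simp add: l2norm_def ip_self_nonneg)

lemma ip_comm: "ip NL m n x y = ip NL m n y x"
  unfolding ip_def by (simp add: split_def mult.commute)

lemma ip_diff_left: "ip NL m n (arr_diff x y) z = ip NL m n x z - ip NL m n y z"
  unfolding ip_def arr_diff_def by (simp add: split_def left_diff_distrib sum_subtractf)

lemma ip_diff_right: "ip NL m n z (arr_diff x y) = ip NL m n z x - ip NL m n z y"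
  unfolding ip_def arr_diff_def by (simp add: split_def right_diff_distrib sum_subtractf)

lemma ip_sc_left: "ip NL m n (sc c x) y = c * ip NL m n x y"
  unfolding ip_def sc_def by (simp add: split_def sum_distrib_left mult.assoc)

lemma ip_sc_right: "ip NL m n x (sc c y) = c * ip NL m n x y"
  unfolding ip_def sc_def by (simp add: split_def sum_distrib_left mult.left_commute)

lemma cauchy_schwarz: "\<bar>ip NL m n x y\<bar> \<le> l2norm NL m n x * l2norm NL m n y"
proof -
  have "\<bar>ip NL m n x y\<bar> \<le> (\<Sum>p\<in>idxs NL m n. \<bar>(\<lambda>(l,a,b). x l a b) p\<bar> * \<bar>(\<lambda>(l,a,b). y l a b) p\<bar>)"
    unfolding ip_def by (rule order_trans[OF sum_abs]) (simp add: split_def abs_mult)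
  also have "\<dots> \<le> l2norm NL m n x * l2norm NL m n y"
    unfolding l2norm_L2 by (rule L2_set_mult_ineq)
  finally show ?thesis .
qed

lemma ip_le: "ip NL m n x y \<le> l2norm NL m n x * l2norm NL m n y"
  using cauchy_schwarz[of NL m n x y] by linarith

lemma l2norm_add: "l2norm NL m n (arr_add x y) \<le> l2norm NL m n x + l2norm NL m n y"
  unfolding l2norm_L2 arr_add_def
  using L2_set_triangle_ineq[of "\<lambda>(l,a,b). x l a b" "\<lambda>(l,a,b). y l a b"]
  by (simp add: split_def)

lemma l2norm_diff_tri: "l2norm NL m n (arr_diff x z) \<le> l2norm NL m n (arr_diff x y) + l2norm NL m n (arr_diff y z)"
proof -
  have "arr_diff x z = arr_add (arr_diff x y) (arr_diff y z)"
    by (simp add: arr_diff_def arr_add_def)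
  thus ?thesis using l2norm_add by metis
qed

lemma l2norm_sc: "l2norm NL m n (sc c x) = \<bar>c\<bar> * l2norm NL m n x"
proof -
  have "ip NL m n (sc c x) (sc c x) = c\<^sup>2 * ip NL m n x x"
    by (simp add: ip_sc_left ip_sc_right power2_eq_square)
  thus ?thesis unfolding l2norm_def by (simp add: real_sqrt_mult)
qed

lemma l2norm_diff_comm: "l2norm NL m n (arr_diff x y) = l2norm NL m n (arr_diff y x)"
proof -
  have "arr_diff x y = sc (-1) (arr_diff y x)" by (simp add: arr_diff_def sc_def fun_eq_iff)
  thus ?thesis by (simp add: l2norm_sc)
qed

lemma l2norm_sub_ge: "l2norm NL m n x - l2norm NL m n (arr_diff x y) \<le> l2norm NL m n y"
proof -
  have "x = arr_add y (arr_diff x y)" by (simp add: arr_diff_def arr_add_def fun_eq_iff)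
  hence "l2norm NL m n x \<le> l2norm NL m n y + l2norm NL m n (arr_diff x y)"
    using l2norm_add[of NL m n y "arr_diff x y"] by simp
  thus ?thesis by linarith
qed

lemma pspace_diff: "x \<in> pspace NL m n \<Longrightarrow> y \<in> pspace NL m n \<Longrightarrow> arr_diff x y \<in> pspace NL m n"
  by (simp add: pspace_def arr_diff_def)
lemma pspace_add: "x \<in> pspace NL m n \<Longrightarrow> y \<in> pspace NL m n \<Longrightarrow> arr_add x y \<in> pspace NL m n"
  by (simp add: pspace_def arr_add_def)
lemma pspace_sc: "x \<in> pspace NL m n \<Longrightarrow> sc c x \<in> pspace NL m n"
  by (simp add: pspace_def sc_def)

lemma l2norm_zero_pspace:
  assumes "x \<in> pspace NL m n" "l2norm NL m n x = 0" shows "x = (\<lambda>l a b. 0)"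
proof (intro ext)
  fix l a b
  show "x l a b = 0"
  proof (cases "(l,a,b) \<in> idxs NL m n")
    case True
    have "\<forall>p\<in>idxs NL m n. (\<lambda>(l,a,b). x l a b) p = 0"
      using assms(2) unfolding l2norm_L2 by (subst (asm) L2_set_eq_0_iff) auto
    with True show ?thesis by fastforce
  next
    case False thus ?thesis using assms(1) by (simp add: pspace_def)
  qed
qed



lemma deriv_line:
  assumes grad: "\<forall>y\<in>pspace NL m n. has_grad NL m n f (grad y) y"
    and x: "x \<in> pspace NL m n" and h: "h \<in> pspace NL m n"
  shows "DERIV (\<lambda>s. f (arr_add x (sc s h))) s :> ip NL m n (grad (arr_add x (sc s h))) h"
proof (cases "l2norm NL m n h = 0")
  case True
  hence h0: "h = (\<lambda>l a b. 0)" using l2norm_zero_pspace[OF h] by simp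
  have e: "\<And>s. arr_add x (sc s h) = x" by (simp add: h0 arr_add_def sc_def)
  have "ip NL m n (grad x) h = 0" by (simp add: h0 ip_def)
  thus ?thesis by (simp add: e)
next
  case False
  define N where "N = l2norm NL m n h"
  have N: "0 < N" using False N_def l2norm_nonneg[of NL m n h] by linarith
  define z where "z = arr_add x (sc s h)"
  have z: "z \<in> pspace NL m n" unfolding z_def by (intro pspace_add pspace_sc x h)
  define c where "c = ip NL m n (grad z) h"
  have zy: "\<And>y. arr_add x (sc y h) = arr_add z (sc (y - s) h)"
    by (simp add: z_def arr_add_def sc_def fun_eq_iff algebra_simps)
  have hg: "has_grad NL m n f (grad z) z" using grad z by blast
  show ?thesis
    unfolding has_field_derivative_iff LIM_eq z_def[symmetric] c_def[symmetric]
  proof (intro allI impI)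
    fix r :: real assume r: "0 < r"
    obtain \<rho> where \<rho>: "0 < \<rho>" and
      H: "\<forall>h'\<in>pspace NL m n. 0 < l2norm NL m n h' \<and> l2norm NL m n h' < \<rho> \<longrightarrow>
          \<bar>f (arr_add z h') - f z - ip NL m n (grad z) h'\<bar> \<le> (r / (2 * N)) * l2norm NL m n h'"
      using hg r N unfolding has_grad_def by (metis divide_pos_pos mult_pos_pos zero_less_numeral)
    show "\<exists>t>0. \<forall>y. y \<noteq> s \<and> norm (y - s) < t \<longrightarrow>
        norm ((f (arr_add x (sc y h)) - f z) / (y - s) - c) < r"
    proof (intro exI[of _ "\<rho> / N"] conjI allI impI)
      show "0 < \<rho> / N" using \<rho> N by simp
      fix y assume y: "y \<noteq> s \<and> norm (y - s) < \<rho> / N"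
      define d where "d = y - s"
      have d0: "d \<noteq> 0" using y d_def by simp
      have hn: "l2norm NL m n (sc d h) = \<bar>d\<bar> * N" by (simp add: l2norm_sc N_def)
      have "\<bar>d\<bar> * N < \<rho>" using y N by (simp add: d_def pos_less_divide_eq)
      moreover have "0 < \<bar>d\<bar> * N" using d0 N by simp
      ultimately have "\<bar>f (arr_add z (sc d h)) - f z - ip NL m n (grad z) (sc d h)\<bar> \<le> (r / (2 * N)) * (\<bar>d\<bar> * N)"
        using H pspace_sc[OF h, of d] hn by auto
      hence A: "\<bar>f (arr_add x (sc y h)) - f z - d * c\<bar> \<le> r / 2 * \<bar>d\<bar>"
        using N by (simp add: zy d_def[symmetric] ip_sc_right c_def)
      have "(f (arr_add x (sc y h)) - f z) / d - c = (f (arr_add x (sc y h)) - f z - d * c) / d"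
        using d0 by (simp add: field_simps)
      hence "\<bar>(f (arr_add x (sc y h)) - f z) / d - c\<bar> = \<bar>f (arr_add x (sc y h)) - f z - d * c\<bar> / \<bar>d\<bar>"
        by simp
      also have "\<dots> \<le> r / 2" using A d0 by (simp add: divide_le_eq)
      also have "\<dots> < r" using r by simp
      finally show "norm ((f (arr_add x (sc y h)) - f z) / (y - s) - c) < r" by (simp add: d_def)
    qed
  qed
qed

lemma descent:
  assumes grad: "\<forall>y\<in>pspace NL m n. has_grad NL m n f (grad y) y"
    and lip: "\<forall>y\<in>pspace NL m n. \<forall>z\<in>pspace NL m n.
        l2norm NL m n (arr_diff (grad y) (grad z)) \<le> L * l2norm NL m n (arr_diff y z)"
    and x: "x \<in> pspace NL m n" and y: "y \<in> pspace NL m n"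
  shows "f y \<le> f x + ip NL m n (grad x) (arr_diff y x) + L / 2 * (l2norm NL m n (arr_diff y x))\<^sup>2"
proof -
  define h where "h = arr_diff y x"
  have h: "h \<in> pspace NL m n" unfolding h_def by (rule pspace_diff[OF y x])
  define N where "N = l2norm NL m n h"
  define c where "c = ip NL m n (grad x) h"
  define \<psi> where "\<psi> = (\<lambda>s. f (arr_add x (sc s h)) - s * c - L / 2 * s\<^sup>2 * N\<^sup>2)"
  have "\<psi> 1 \<le> \<psi> 0"
  proof (rule DERIV_nonpos_imp_nonincreasing[of 0 1 \<psi>])
    fix s :: real assume s: "0 \<le> s" "s \<le> 1"
    define z where "z = arr_add x (sc s h)"
    have z: "z \<in> pspace NL m n" unfolding z_def by (intro pspace_add pspace_sc x h)
    have D: "DERIV \<psi> s :> ip NL m n (grad z) h - c - L * s * N\<^sup>2"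
      unfolding \<psi>_def z_def
      by (auto intro!: derivative_eq_intros deriv_line[OF grad x h] simp: power2_eq_square)
    have zx: "arr_diff z x = sc s h" by (simp add: z_def arr_diff_def arr_add_def sc_def fun_eq_iff)
    have "ip NL m n (grad z) h - c = ip NL m n (arr_diff (grad z) (grad x)) h"
      by (simp add: c_def ip_diff_left)
    also have "\<dots> \<le> l2norm NL m n (arr_diff (grad z) (grad x)) * N"
      unfolding N_def by (rule ip_le)
    also have "\<dots> \<le> (L * l2norm NL m n (arr_diff z x)) * N"
      using lip z x N_def by (intro mult_right_mono) auto
    also have "\<dots> = L * s * N\<^sup>2" using s by (simp add: zx l2norm_sc N_def power2_eq_square)
    finally show "\<exists>y. DERIV \<psi> s :> y \<and> y \<le> 0" using D by (intro exI[of _ "ip NL m n (grad z) h - c - L * s * N\<^sup>2"]) auto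
  qed simp
  moreover have "arr_add x (sc 1 h) = y" by (simp add: h_def arr_add_def arr_diff_def sc_def fun_eq_iff)
  moreover have "arr_add x (sc 0 h) = x" by (simp add: arr_add_def sc_def fun_eq_iff)
  ultimately show ?thesis by (simp add: \<psi>_def c_def N_def h_def)
qed



definition orth :: "nat \<Rightarrow> nat \<Rightarrow> matr \<Rightarrow> bool" where
  "orth mm r P \<longleftrightarrow> (\<forall>i<r. \<forall>j<r. (\<Sum>a<mm. P a i * P a j) = (if i = j then 1 else 0))"

lemma orth_sq:
  assumes "orth mm r P"
  shows "(\<Sum>a<mm. (\<Sum>i<r. P a i * c i)\<^sup>2) = (\<Sum>i<r. (c i)\<^sup>2)"
proof -
  have "(\<Sum>a<mm. (\<Sum>i<r. P a i * c i)\<^sup>2) = (\<Sum>a<mm. \<Sum>i<r. \<Sum>j<r. (c i * c j) * (P a i * P a j))"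
    by (simp add: power2_eq_square sum_product algebra_simps)
  also have "\<dots> = (\<Sum>i<r. \<Sum>j<r. (c i * c j) * (\<Sum>a<mm. P a i * P a j))"
    by (simp add: sum_distrib_left sum.swap[of _ "{..<mm}"])
  also have "\<dots> = (\<Sum>i<r. \<Sum>j<r. (c i * c j) * (if i = j then 1 else 0))"
    using assms unfolding orth_def by (intro sum.cong refl) auto
  also have "\<dots> = (\<Sum>i<r. (c i)\<^sup>2)"
    by (simp add: power2_eq_square if_distrib cong: if_cong)
  finally show ?thesis .
qed

lemma orth_coef:
  assumes "orth mm r P" "i < r"
  shows "(\<Sum>a<mm. P a i * (\<Sum>k<r. P a k * c k)) = c i"
proof -
  have "(\<Sum>a<mm. P a i * (\<Sum>k<r. P a k * c k)) = (\<Sum>k<r. c k * (\<Sum>a<mm. P a i * P a k))"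
    by (simp add: sum_distrib_left sum_distrib_right sum.swap[of _ "{..<mm}"] algebra_simps)
  also have "\<dots> = (\<Sum>k<r. c k * (if i = k then 1 else 0))"
    using assms unfolding orth_def by (intro sum.cong refl) auto
  also have "\<dots> = c i" using assms(2) by (simp add: if_distrib cong: if_cong)
  finally show ?thesis .
qed

lemma orth_mono: "orth mm r P \<Longrightarrow> k \<le> r \<Longrightarrow> orth mm k P"
  unfolding orth_def by auto

lemma orth_cong: "orth mm r P \<Longrightarrow> (\<forall>a<mm. \<forall>i<r. P' a i = P a i) \<Longrightarrow> orth mm r P'"
  unfolding orth_def by auto

lemma svd_orthU: "is_svd mm nn G U S V \<Longrightarrow> orth mm mm U"
  unfolding is_svd_def orth_def by auto
lemma svd_orthV: "is_svd mm nn G U S V \<Longrightarrow> orth nn nn V"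
  unfolding is_svd_def orth_def by auto

lemma svd_diag:
  assumes "is_svd mm nn G U S V" "a < mm" "b < nn"
  shows "G a b = (\<Sum>i<min mm nn. U a i * (S i i * V b i))"
proof -
  have "G a b = (\<Sum>i<mm. \<Sum>j<nn. U a i * S i j * V b j)" using assms unfolding is_svd_def by auto
  also have "\<dots> = (\<Sum>i<mm. if i < nn then U a i * (S i i * V b i) else 0)"
  proof (intro sum.cong refl)
    fix i assume i: "i \<in> {..<mm}"
    have "(\<Sum>j<nn. U a i * S i j * V b j) = (\<Sum>j<nn. if j = i then U a i * S i i * V b i else 0)"
      using assms(1) i unfolding is_svd_def by (intro sum.cong refl) auto
    thus "(\<Sum>j<nn. U a i * S i j * V b j) = (if i < nn then U a i * (S i i * V b i) else 0)"
      by (simp add: mult.assoc)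
  qed
  also have "\<dots> = (\<Sum>i\<in>{..<mm} \<inter> {i. i < nn}. U a i * (S i i * V b i))"
    by (simp add: sum.inter_restrict)
  also have "{..<mm} \<inter> {i. i < nn} = {..<min mm nn}" by auto
  finally show ?thesis by simp
qed

lemma svd_norm:
  assumes "is_svd mm nn G U S V"
  shows "(\<Sum>a<mm. \<Sum>b<nn. (G a b)\<^sup>2) = (\<Sum>i<min mm nn. (S i i)\<^sup>2)"
proof -
  let ?k = "min mm nn"
  have oU: "orth mm ?k U" using orth_mono[OF svd_orthU[OF assms]] by simp
  have "(\<Sum>a<mm. \<Sum>b<nn. (G a b)\<^sup>2) = (\<Sum>b<nn. \<Sum>a<mm. (\<Sum>i<?k. U a i * (S i i * V b i))\<^sup>2)"
    using svd_diag[OF assms] by (subst sum.swap) (intro sum.cong refl, simp)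
  also have "\<dots> = (\<Sum>b<nn. \<Sum>i<?k. (S i i * V b i)\<^sup>2)"
    by (intro sum.cong refl orth_sq[OF oU])
  also have "\<dots> = (\<Sum>i<?k. (S i i)\<^sup>2 * (\<Sum>b<nn. V b i * V b i))"
    by (subst sum.swap) (simp add: sum_distrib_left power2_eq_square algebra_simps)
  also have "\<dots> = (\<Sum>i<?k. (S i i)\<^sup>2)"
    using svd_orthV[OF assms] unfolding orth_def by (intro sum.cong refl) auto
  finally show ?thesis .
qed

lemma svd_coefL:
  assumes "is_svd mm nn G U S V" "i < min mm nn" "b < nn"
  shows "(\<Sum>a<mm. U a i * G a b) = S i i * V b i"
proof -
  have oU: "orth mm (min mm nn) U" using orth_mono[OF svd_orthU[OF assms(1)]] by simp
  have "(\<Sum>a<mm. U a i * G a b) = (\<Sum>a<mm. U a i * (\<Sum>k<min mm nn. U a k * (S k k * V b k)))"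
    using svd_diag[OF assms(1) _ assms(3)] by simp
  also have "\<dots> = S i i * V b i" by (rule orth_coef[OF oU assms(2)])
  finally show ?thesis .
qed

lemma svd_coefR:
  assumes "is_svd mm nn G U S V" "i < min mm nn" "a < mm"
  shows "(\<Sum>b<nn. G a b * V b i) = U a i * S i i"
proof -
  have oV: "orth nn (min mm nn) V" using orth_mono[OF svd_orthV[OF assms(1)]] by simp
  have "(\<Sum>b<nn. G a b * V b i) = (\<Sum>b<nn. V b i * (\<Sum>k<min mm nn. V b k * (U a k * S k k)))"
    using svd_diag[OF assms(1) assms(3)] by (intro sum.cong refl) (simp add: algebra_simps)
  also have "\<dots> = U a i * S i i" by (rule orth_coef[OF oV assms(2)])
  finally show ?thesis .
qed

lemma avg_lemma:
  fixes s :: "nat \<Rightarrow> real"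
  assumes r: "0 < r" "r \<le> k" and mono: "\<forall>i j. i \<le> j \<and> j < k \<longrightarrow> s j \<le> s i"
    and nn: "\<forall>i<k. 0 \<le> s i"
  shows "real r / real k * (\<Sum>i<k. (s i)\<^sup>2) \<le> (\<Sum>i<r. (s i)\<^sup>2)"
proof -
  define m0 where "m0 = (s (r - 1))\<^sup>2"
  have M1: "\<And>i. i < r \<Longrightarrow> s (r - 1) \<le> s i" using r by (intro mono[rule_format]) auto
  have M2: "\<And>i. r \<le> i \<Longrightarrow> i < k \<Longrightarrow> s i \<le> s (r - 1)" using r by (intro mono[rule_format]) auto
  have N1: "\<And>i. i < k \<Longrightarrow> 0 \<le> s i" using nn by auto
  have A: "real r * m0 \<le> (\<Sum>i<r. (s i)\<^sup>2)"
  proof -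
    have "(\<Sum>i<r. m0) \<le> (\<Sum>i<r. (s i)\<^sup>2)"
      unfolding m0_def using M1 N1 r by (intro sum_mono power_mono) auto
    thus ?thesis by simp
  qed
  have B: "(\<Sum>i\<in>{r..<k}. (s i)\<^sup>2) \<le> real (k - r) * m0"
  proof -
    have "(\<Sum>i\<in>{r..<k}. (s i)\<^sup>2) \<le> (\<Sum>i\<in>{r..<k}. m0)"
      unfolding m0_def using M2 N1 r by (intro sum_mono power_mono) auto
    thus ?thesis by simp
  qed
  have split: "(\<Sum>i<k. (s i)\<^sup>2) = (\<Sum>i<r. (s i)\<^sup>2) + (\<Sum>i\<in>{r..<k}. (s i)\<^sup>2)"
  proof -
    have "{..<k} = {..<r} \<union> {r..<k}" using r by auto
    thus ?thesis by (simp add: sum.union_disjoint[of "{..<r}" "{r..<k}"] ivl_disj_int)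
  qed
  have m0: "0 \<le> m0" by (simp add: m0_def)
  have kr: "real (k - r) = real k - real r" using r by simp
  have k: "0 < real k" using r by simp
  define X where "X = (\<Sum>i<r. (s i)\<^sup>2)"
  define Y where "Y = (\<Sum>i\<in>{r..<k}. (s i)\<^sup>2)"
  have "real r * Y \<le> real r * ((real k - real r) * m0)" using B r kr unfolding Y_def by (intro mult_left_mono) auto
  also have "\<dots> = (real k - real r) * (real r * m0)" by simp
  also have "\<dots> \<le> (real k - real r) * X" using A r unfolding X_def by (intro mult_left_mono) auto
  finally have "real r * (X + Y) \<le> real k * X" by (simp add: algebra_simps)
  hence "real r / real k * (X + Y) \<le> X" using k by (simp add: field_simps)
  thus ?thesis using split unfolding X_def Y_def by simp
qed



definition proj :: "nat \<Rightarrow> (nat \<Rightarrow> nat) \<Rightarrow> (nat \<Rightarrow> nat) \<Rightarrow> (nat \<Rightarrow> nat) \<Rightarrow> (nat \<Rightarrow> matr) \<Rightarrow> (nat \<Rightarrow> matr) \<Rightarrow> arr \<Rightarrow> arr" where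
  "proj NL m n r P Q g = (\<lambda>l a b. if l < NL \<and> a < m l \<and> b < n l then
     (if m l \<le> n l then (\<Sum>i<r l. P l a i * (\<Sum>a'<m l. P l a' i * g l a' b))
      else (\<Sum>i<r l. (\<Sum>b'<n l. g l a b' * Q l b' i) * Q l b i)) else 0)"

definition Nterm :: "nat \<Rightarrow> nat \<Rightarrow> nat \<Rightarrow> matr \<Rightarrow> matr \<Rightarrow> matr \<Rightarrow> real" where
  "Nterm M N R P Q g = (if M \<le> N then (\<Sum>i<R. \<Sum>b<N. (\<Sum>a<M. P a i * g a b)\<^sup>2)
      else (\<Sum>a<M. \<Sum>i<R. (\<Sum>b<N. g a b * Q b i)\<^sup>2))"

definition Nq :: "nat \<Rightarrow> (nat \<Rightarrow> nat) \<Rightarrow> (nat \<Rightarrow> nat) \<Rightarrow> (nat \<Rightarrow> nat) \<Rightarrow> (nat \<Rightarrow> matr) \<Rightarrow> (nat \<Rightarrow> matr) \<Rightarrow> arr \<Rightarrow> real" where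
  "Nq NL m n r P Q g = (\<Sum>l<NL. Nterm (m l) (n l) (r l) (P l) (Q l) (layer g l))"

definition orthall :: "nat \<Rightarrow> (nat \<Rightarrow> nat) \<Rightarrow> (nat \<Rightarrow> nat) \<Rightarrow> (nat \<Rightarrow> nat) \<Rightarrow> (nat \<Rightarrow> matr) \<Rightarrow> (nat \<Rightarrow> matr) \<Rightarrow> bool" where
  "orthall NL m n r P Q \<longleftrightarrow> (\<forall>l<NL. orth (m l) (r l) (P l) \<and> orth (n l) (r l) (Q l))"

lemma mat_ip1:
  fixes g P :: "nat \<Rightarrow> nat \<Rightarrow> real"
  shows
  "(\<Sum>a<M. \<Sum>b<N. g a b * (\<Sum>i<R. P a i * (\<Sum>a'<M. P a' i * g a' b))) = (\<Sum>i<R. \<Sum>b<N. (\<Sum>a<M. P a i * g a b)\<^sup>2)"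
proof -
  have "(\<Sum>a<M. \<Sum>b<N. g a b * (\<Sum>i<R. P a i * (\<Sum>a'<M. P a' i * g a' b)))
      = (\<Sum>a<M. \<Sum>b<N. \<Sum>i<R. (P a i * g a b) * (\<Sum>a'<M. P a' i * g a' b))"
    by (simp add: sum_distrib_left mult_ac)
  also have "\<dots> = (\<Sum>b<N. \<Sum>i<R. \<Sum>a<M. (P a i * g a b) * (\<Sum>a'<M. P a' i * g a' b))"
    by (subst sum.swap) (simp add: sum.swap[of _ "{..<R}"])
  also have "\<dots> = (\<Sum>b<N. \<Sum>i<R. (\<Sum>a<M. P a i * g a b)\<^sup>2)"
    by (simp add: power2_eq_square sum_distrib_right)
  also have "\<dots> = (\<Sum>i<R. \<Sum>b<N. (\<Sum>a<M. P a i * g a b)\<^sup>2)"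
    by (rule sum.swap)
  finally show ?thesis .
qed

lemma mat_ip2:
  fixes g Q :: "nat \<Rightarrow> nat \<Rightarrow> real"
  shows
  "(\<Sum>a<M. \<Sum>b<N. g a b * (\<Sum>i<R. (\<Sum>b'<N. g a b' * Q b' i) * Q b i)) = (\<Sum>a<M. \<Sum>i<R. (\<Sum>b<N. g a b * Q b i)\<^sup>2)"
proof (rule sum.cong[OF refl])
  fix a
  have "(\<Sum>b<N. g a b * (\<Sum>i<R. (\<Sum>b'<N. g a b' * Q b' i) * Q b i))
      = (\<Sum>b<N. \<Sum>i<R. (g a b * Q b i) * (\<Sum>b'<N. g a b' * Q b' i))"
    by (simp add: sum_distrib_left mult_ac)
  also have "\<dots> = (\<Sum>i<R. \<Sum>b<N. (g a b * Q b i) * (\<Sum>b'<N. g a b' * Q b' i))"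
    by (rule sum.swap)
  also have "\<dots> = (\<Sum>i<R. (\<Sum>b<N. g a b * Q b i)\<^sup>2)"
    by (simp add: power2_eq_square sum_distrib_right)
  finally show "(\<Sum>b<N. g a b * (\<Sum>i<R. (\<Sum>b'<N. g a b' * Q b' i) * Q b i)) = (\<Sum>i<R. (\<Sum>b<N. g a b * Q b i)\<^sup>2)" .
qed

lemma mat_sq1:
  assumes "orth M R P"
  shows "(\<Sum>a<M. \<Sum>b<N. (\<Sum>i<R. P a i * (\<Sum>a'<M. P a' i * g a' b))\<^sup>2) = (\<Sum>i<R. \<Sum>b<N. (\<Sum>a<M. P a i * g a b)\<^sup>2)"
proof -
  have "(\<Sum>a<M. \<Sum>b<N. (\<Sum>i<R. P a i * (\<Sum>a'<M. P a' i * g a' b))\<^sup>2)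
     = (\<Sum>b<N. \<Sum>a<M. (\<Sum>i<R. P a i * (\<Sum>a'<M. P a' i * g a' b))\<^sup>2)" by (rule sum.swap)
  also have "\<dots> = (\<Sum>b<N. \<Sum>i<R. (\<Sum>a'<M. P a' i * g a' b)\<^sup>2)"
    by (intro sum.cong refl orth_sq[OF assms])
  also have "\<dots> = (\<Sum>i<R. \<Sum>b<N. (\<Sum>a<M. P a i * g a b)\<^sup>2)" by (rule sum.swap)
  finally show ?thesis .
qed

lemma mat_sq2:
  assumes "orth N R Q"
  shows "(\<Sum>a<M. \<Sum>b<N. (\<Sum>i<R. (\<Sum>b'<N. g a b' * Q b' i) * Q b i)\<^sup>2) = (\<Sum>a<M. \<Sum>i<R. (\<Sum>b<N. g a b * Q b i)\<^sup>2)"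
proof (rule sum.cong[OF refl])
  fix a
  have "(\<Sum>b<N. (\<Sum>i<R. (\<Sum>b'<N. g a b' * Q b' i) * Q b i)\<^sup>2) = (\<Sum>b<N. (\<Sum>i<R. Q b i * (\<Sum>b'<N. g a b' * Q b' i))\<^sup>2)"
    by (simp add: mult.commute)
  also have "\<dots> = (\<Sum>i<R. (\<Sum>b'<N. g a b' * Q b' i)\<^sup>2)" by (rule orth_sq[OF assms])
  finally show "(\<Sum>b<N. (\<Sum>i<R. (\<Sum>b'<N. g a b' * Q b' i) * Q b i)\<^sup>2) = (\<Sum>i<R. (\<Sum>b<N. g a b * Q b i)\<^sup>2)" .
qed

lemma proj_in:
  "l < NL \<Longrightarrow> a < m l \<Longrightarrow> b < n l \<Longrightarrow> proj NL m n r P Q g l a b =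
     (if m l \<le> n l then (\<Sum>i<r l. P l a i * (\<Sum>a'<m l. P l a' i * g l a' b))
      else (\<Sum>i<r l. (\<Sum>b'<n l. g l a b' * Q l b' i) * Q l b i))"
  by (simp add: proj_def)

lemma proj_ip: "ip NL m n g (proj NL m n r P Q g) = Nq NL m n r P Q g"
  unfolding ip_nested Nq_def
proof (intro sum.cong refl)
  fix l assume l: "l \<in> {..<NL}"
  have "(\<Sum>a<m l. \<Sum>b<n l. g l a b * proj NL m n r P Q g l a b) =
        (\<Sum>a<m l. \<Sum>b<n l. g l a b * (if m l \<le> n l then (\<Sum>i<r l. P l a i * (\<Sum>a'<m l. P l a' i * g l a' b))
      else (\<Sum>i<r l. (\<Sum>b'<n l. g l a b' * Q l b' i) * Q l b i)))"
    using l by (intro sum.cong refl) (simp add: proj_in)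
  also have "\<dots> = Nterm (m l) (n l) (r l) (P l) (Q l) (layer g l)"
    by (cases "m l \<le> n l") (simp_all add: Nterm_def layer_def mat_ip1 mat_ip2)
  finally show "(\<Sum>a<m l. \<Sum>b<n l. g l a b * proj NL m n r P Q g l a b) = Nterm (m l) (n l) (r l) (P l) (Q l) (layer g l)" .
qed

lemma proj_sq:
  assumes "orthall NL m n r P Q"
  shows "ip NL m n (proj NL m n r P Q g) (proj NL m n r P Q g) = Nq NL m n r P Q g"
  unfolding ip_nested Nq_def
proof (intro sum.cong refl)
  fix l assume l: "l \<in> {..<NL}"
  have o: "orth (m l) (r l) (P l)" "orth (n l) (r l) (Q l)" using assms l by (auto simp: orthall_def)
  have "(\<Sum>a<m l. \<Sum>b<n l. proj NL m n r P Q g l a b * proj NL m n r P Q g l a b) =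
        (\<Sum>a<m l. \<Sum>b<n l. (if m l \<le> n l then (\<Sum>i<r l. P l a i * (\<Sum>a'<m l. P l a' i * g l a' b))
      else (\<Sum>i<r l. (\<Sum>b'<n l. g l a b' * Q l b' i) * Q l b i))\<^sup>2)"
    using l by (intro sum.cong refl) (simp add: proj_in power2_eq_square)
  also have "\<dots> = Nterm (m l) (n l) (r l) (P l) (Q l) (layer g l)"
    by (cases "m l \<le> n l") (simp_all add: Nterm_def layer_def mat_sq1[OF o(1)] mat_sq2[OF o(2)])
  finally show "(\<Sum>a<m l. \<Sum>b<n l. proj NL m n r P Q g l a b * proj NL m n r P Q g l a b) = Nterm (m l) (n l) (r l) (P l) (Q l) (layer g l)" .
qed

lemma proj_norm_sq:
  assumes "orthall NL m n r P Q"
  shows "(l2norm NL m n (proj NL m n r P Q g))\<^sup>2 = ip NL m n g (proj NL m n r P Q g)"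
  by (simp add: l2norm_sq proj_sq[OF assms] proj_ip)

lemma proj_le:
  assumes "orthall NL m n r P Q"
  shows "l2norm NL m n (proj NL m n r P Q g) \<le> l2norm NL m n g"
proof -
  let ?p = "l2norm NL m n (proj NL m n r P Q g)"
  have "?p * ?p \<le> l2norm NL m n g * ?p"
    using proj_norm_sq[OF assms, of g] ip_le[of NL m n g "proj NL m n r P Q g"]
    by (simp add: power2_eq_square mult.commute)
  thus ?thesis
    by (cases "?p = 0") (auto simp: mult_le_cancel_right less_le)
qed

lemma proj_diff: "proj NL m n r P Q (arr_diff g h) = arr_diff (proj NL m n r P Q g) (proj NL m n r P Q h)"
  by (simp add: proj_def arr_diff_def fun_eq_iff right_diff_distrib left_diff_distrib sum_subtractf)

lemma proj_cong:
  assumes "\<forall>l<NL. \<forall>a<m l. \<forall>i<r l. P l a i = P' l a i"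
    and "\<forall>l<NL. \<forall>b<n l. \<forall>i<r l. Q l b i = Q' l b i"
  shows "proj NL m n r P Q = proj NL m n r P' Q'"
proof (intro ext)
  fix g l a b
  show "proj NL m n r P Q g l a b = proj NL m n r P' Q' g l a b"
    using assms unfolding proj_def by (auto intro!: sum.cong)
qed

lemma Nterm_svd:
  assumes svd: "is_svd M N G U S V" and r: "0 < R" "R < min M N"
    and PU: "\<forall>a<M. \<forall>i<R. P a i = U a i" and QV: "\<forall>b<N. \<forall>i<R. Q b i = V b i"
  shows "real R / real (min M N) * (\<Sum>a<M. \<Sum>b<N. (G a b)\<^sup>2) \<le> Nterm M N R P Q G"
proof -
  have T: "Nterm M N R P Q G = (\<Sum>i<R. (S i i)\<^sup>2)"
  proof (cases "M \<le> N")
    case True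
    have "Nterm M N R P Q G = (\<Sum>i<R. \<Sum>b<N. (\<Sum>a<M. U a i * G a b)\<^sup>2)"
      using True PU by (simp add: Nterm_def)
    also have "\<dots> = (\<Sum>i<R. \<Sum>b<N. (S i i * V b i)\<^sup>2)"
      using r by (intro sum.cong refl) (simp add: svd_coefL[OF svd])
    also have "\<dots> = (\<Sum>i<R. (S i i)\<^sup>2 * (\<Sum>b<N. V b i * V b i))"
      by (simp add: sum_distrib_left power2_eq_square algebra_simps)
    also have "\<dots> = (\<Sum>i<R. (S i i)\<^sup>2)"
      using svd_orthV[OF svd] r unfolding orth_def by (intro sum.cong refl) auto
    finally show ?thesis .
  next
    case False
    have "Nterm M N R P Q G = (\<Sum>a<M. \<Sum>i<R. (\<Sum>b<N. G a b * V b i)\<^sup>2)"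
      using False QV by (simp add: Nterm_def)
    also have "\<dots> = (\<Sum>a<M. \<Sum>i<R. (U a i * S i i)\<^sup>2)"
      using r by (intro sum.cong refl) (simp add: svd_coefR[OF svd])
    also have "\<dots> = (\<Sum>i<R. (S i i)\<^sup>2 * (\<Sum>a<M. U a i * U a i))"
      by (subst sum.swap) (simp add: sum_distrib_left power2_eq_square algebra_simps)
    also have "\<dots> = (\<Sum>i<R. (S i i)\<^sup>2)"
      using svd_orthU[OF svd] r unfolding orth_def by (intro sum.cong refl) auto
    finally show ?thesis .
  qed
  have "real R / real (min M N) * (\<Sum>i<min M N. (S i i)\<^sup>2) \<le> (\<Sum>i<R. (S i i)\<^sup>2)"
    using svd r unfolding is_svd_def by (intro avg_lemma) auto
  thus ?thesis using T svd_norm[OF svd] by simp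
qed



lemma blk_start:
  assumes "0 < (\<tau>::nat)" "t - t mod \<tau> \<le> u" "u \<le> t"
  shows "u - u mod \<tau> = t - t mod \<tau>"
proof -
  define s where "s = t - t mod \<tau>"
  have s: "s = \<tau> * (t div \<tau>)" unfolding s_def by (simp add: minus_mod_eq_mult_div)
  define k where "k = u - s"
  have u: "u = \<tau> * (t div \<tau>) + k" using assms s unfolding k_def s_def by simp
  have "k \<le> t mod \<tau>" using assms unfolding k_def s_def by simp
  hence "k < \<tau>" using assms(1) by (meson le_less_trans mod_less_divisor)
  hence "u mod \<tau> = k" using u by simp
  thus ?thesis using u s s_def by simp
qed

lemma numeric_step:
  fixes g p F :: "nat \<Rightarrow> real" and \<eta> L q :: real and \<tau> :: nat
  assumes eta: "0 < \<eta>" and L: "0 < L" and Le: "L * \<eta> \<le> 1/4" and Let: "L * \<eta> * real \<tau> \<le> q / 5"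
    and q: "0 < q" "q \<le> 1" and tau: "0 < \<tau>"
    and g0: "\<forall>t. 0 \<le> g t" and p0: "\<forall>t. 0 \<le> p t"
    and desc: "\<forall>t. F (Suc t) \<le> F t - \<eta> * (p t)\<^sup>2 + L * \<eta>\<^sup>2 / 2 * (p t)\<^sup>2"
    and blk: "\<forall>t. q * g (t - t mod \<tau>) - L * \<eta> * (\<Sum>v\<in>{t - t mod \<tau>..<t}. g v) \<le> p t \<and>
                 g t \<le> g (t - t mod \<tau>) + L * \<eta> * (\<Sum>v\<in>{t - t mod \<tau>..<t}. g v)"
  shows "\<eta> * q\<^sup>2 / 8 * (g t)\<^sup>2 \<le> F t - F (Suc t)"
proof -
  define s where "s = t - t mod \<tau>"
  have st: "s \<le> t" unfolding s_def by simp
  have ts: "t - s < \<tau>" unfolding s_def using tau by simp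
  have Lep: "0 \<le> L * \<eta>" using L eta by simp
  have bound: "\<And>k. k \<le> t - s \<Longrightarrow> (\<Sum>v\<in>{s..<s+k}. g v) \<le> real k * (2 * g s) \<Longrightarrow>
      L * \<eta> * (\<Sum>v\<in>{s..<s+k}. g v) \<le> 2 * q / 5 * g s"
  proof -
    fix k assume k: "k \<le> t - s" and S: "(\<Sum>v\<in>{s..<s+k}. g v) \<le> real k * (2 * g s)"
    have "L * \<eta> * (\<Sum>v\<in>{s..<s+k}. g v) \<le> L * \<eta> * (real k * (2 * g s))"
      using S Lep by (rule mult_left_mono)
    also have "\<dots> \<le> L * \<eta> * (real \<tau> * (2 * g s))"
      using k ts Lep g0 by (intro mult_left_mono mult_right_mono) auto
    also have "\<dots> = (L * \<eta> * real \<tau>) * (2 * g s)" by simp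
    also have "\<dots> \<le> q / 5 * (2 * g s)" using Let g0 by (intro mult_right_mono) auto
    finally show "L * \<eta> * (\<Sum>v\<in>{s..<s+k}. g v) \<le> 2 * q / 5 * g s" by simp
  qed
  have claim: "\<forall>k. k \<le> t - s \<longrightarrow> g (s + k) \<le> 2 * g s"
  proof (intro allI)
    fix k show "k \<le> t - s \<longrightarrow> g (s + k) \<le> 2 * g s"
    proof (induction k rule: less_induct)
      case (less k)
      show ?case
      proof
        assume k: "k \<le> t - s"
        have bs: "s + k - (s + k) mod \<tau> = s" unfolding s_def
          using blk_start[OF tau, of t "s + k"] k st s_def by simp
        have S: "(\<Sum>v\<in>{s..<s+k}. g v) \<le> real k * (2 * g s)"
        proof -
          have "(\<Sum>v\<in>{s..<s+k}. g v) \<le> of_nat (card {s..<s+k}) * (2 * g s)"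
          proof (rule sum_bounded_above)
            fix v assume v: "v \<in> {s..<s+k}"
            hence "v = s + (v - s)" "v - s < k" by auto
            thus "g v \<le> 2 * g s" using less.IH[of "v - s"] k by (metis less_imp_le_nat order.trans)
          qed
          thus ?thesis by simp
        qed
        have "g (s + k) \<le> g s + L * \<eta> * (\<Sum>v\<in>{s..<s+k}. g v)"
          using blk[rule_format, of "s + k"] bs by simp
        also have "\<dots> \<le> g s + 2 * q / 5 * g s" using bound[OF k S] by simp
        also have "\<dots> \<le> 2 * g s"
        proof -
          have "q * g s \<le> 1 * g s" using q g0 by (intro mult_right_mono) auto
          moreover have "2 * q / 5 * g s = 2/5 * (q * g s)" by simp
          ultimately show ?thesis using g0[rule_format, of s] by linarith
        qed
        finally show "g (s + k) \<le> 2 * g s" .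
      qed
    qed
  qed
  have S: "(\<Sum>v\<in>{s..<s+(t-s)}. g v) \<le> real (t - s) * (2 * g s)"
  proof -
    have "(\<Sum>v\<in>{s..<s+(t-s)}. g v) \<le> of_nat (card {s..<s+(t-s)}) * (2 * g s)"
    proof (rule sum_bounded_above)
      fix v assume v: "v \<in> {s..<s+(t-s)}"
      hence "v = s + (v - s)" "v - s \<le> t - s" by auto
      thus "g v \<le> 2 * g s" using claim by metis
    qed
    thus ?thesis by simp
  qed
  have E: "L * \<eta> * (\<Sum>v\<in>{s..<t}. g v) \<le> 2 * q / 5 * g s"
    using bound[OF order.refl S] st by simp
  have gs0: "0 \<le> g s" using g0 by simp
  have gt0: "0 \<le> g t" using g0 by simp
  have P1: "3 / 5 * q * g s \<le> p t" using blk[rule_format, of t] E unfolding s_def[symmetric] by linarith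
  have G1: "g t \<le> 7 / 5 * g s"
  proof -
    have "g t \<le> g s + 2 * q / 5 * g s" using blk[rule_format, of t] E unfolding s_def[symmetric] by linarith
    also have "\<dots> \<le> 7/5 * g s"
    proof -
      have "q * g s \<le> 1 * g s" using q gs0 by (intro mult_right_mono) auto
      moreover have "2 * q / 5 * g s = 2/5 * (q * g s)" by simp
      ultimately show ?thesis using gs0 by linarith
    qed
    finally show ?thesis .
  qed
  have P2: "3 / 7 * q * g t \<le> p t"
  proof -
    have "3 / 7 * q * g t \<le> 3 / 7 * q * (7 / 5 * g s)" using G1 q by (intro mult_left_mono) auto
    also have "\<dots> = 3 / 5 * q * g s" by simp
    finally show ?thesis using P1 by linarith
  qed
  have P3: "(3 / 7 * q * g t)\<^sup>2 \<le> (p t)\<^sup>2" using P2 q gt0 by (intro power_mono) auto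
  have D: "F t - F (Suc t) \<ge> \<eta> * (p t)\<^sup>2 * (1 - L * \<eta> / 2)"
    using desc[rule_format, of t] by (simp add: power2_eq_square algebra_simps)
  have "\<eta> * q\<^sup>2 / 8 * (g t)\<^sup>2 \<le> \<eta> * (7/8) * (3 / 7 * q * g t)\<^sup>2"
    using eta q gt0 by (simp add: power2_eq_square algebra_simps)
  also have "\<dots> \<le> \<eta> * (7/8) * (p t)\<^sup>2" using P3 eta by (intro mult_left_mono) auto
  also have "\<dots> \<le> \<eta> * (p t)\<^sup>2 * (1 - L * \<eta> / 2)"
  proof -
    have "7/8 \<le> 1 - L * \<eta> / 2" using Le by simp
    hence "\<eta> * (p t)\<^sup>2 * (7/8) \<le> \<eta> * (p t)\<^sup>2 * (1 - L * \<eta> / 2)"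
      using eta by (intro mult_left_mono) auto
    thus ?thesis by (simp add: mult_ac)
  qed
  also have "\<dots> \<le> F t - F (Suc t)" using D .
  finally show ?thesis .
qed

lemma telescope:
  fixes F h :: "nat \<Rightarrow> real"
  assumes "\<forall>t. h t \<le> F t - F (Suc t)"
  shows "(\<Sum>t<T. h t) \<le> F 0 - F T"
proof (induction T)
  case 0 thus ?case by simp
next
  case (Suc T) thus ?case using assms[rule_format, of T] by simp
qed



lemma galore_svd:
  assumes "galore_det_mp NL m n r grad \<eta> \<tau> 1 x P Q M" "l < NL" "t mod \<tau> = 0"
  shows "\<exists>U S V. is_svd (m l) (n l) (layer (grad (x t)) l) U S V \<and> (\<forall>a<m l. \<forall>i<r l. P t l a i = U a i) \<and> (\<forall>b<n l. \<forall>i<r l. Q t l b i = V b i)"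
  using assms unfolding galore_det_mp_def Let_def by auto

lemma galore_keep:
  assumes "galore_det_mp NL m n r grad \<eta> \<tau> 1 x P Q M" "l < NL" "t mod \<tau> \<noteq> 0"
  shows "(\<forall>a<m l. \<forall>i<r l. P t l a i = P (t - 1) l a i) \<and> (\<forall>b<n l. \<forall>i<r l. Q t l b i = Q (t - 1) l b i)"
  using assms unfolding galore_det_mp_def Let_def by auto

lemma galore_step:
  assumes "galore_det_mp NL m n r grad \<eta> \<tau> 1 x P Q M"
  shows "x (Suc t) = arr_diff (x t) (sc \<eta> (proj NL m n r (P t) (Q t) (grad (x t))))"
proof (intro ext)
  fix l a b
  have ps: "x t \<in> pspace NL m n" "x (Suc t) \<in> pspace NL m n" using assms unfolding galore_det_mp_def by auto
  show "x (Suc t) l a b = arr_diff (x t) (sc \<eta> (proj NL m n r (P t) (Q t) (grad (x t)))) l a b"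
  proof (cases "l < NL \<and> a < m l \<and> b < n l")
    case True
    hence l: "l < NL" and ab: "a < m l" "b < n l" by auto
    have H: "(if m l \<le> n l then
          (\<forall>i<r l. \<forall>b<n l. M t l i b =
              (if t = 0 then 0 else
                 (1 - 1) * (\<Sum>p<r l. (\<Sum>a<m l. P t l a i * P (t - 1) l a p) * M (t - 1) l p b))
              + 1 * (\<Sum>a<m l. P t l a i * layer (grad (x t)) l a b)) \<and>
          (\<forall>a<m l. \<forall>b<n l. x (Suc t) l a b = x t l a b - \<eta> * (\<Sum>i<r l. P t l a i * M t l i b))
        else
          (\<forall>a<m l. \<forall>i<r l. M t l a i =
              (if t = 0 then 0 else
                 (1 - 1) * (\<Sum>j<r l. M (t - 1) l a j * (\<Sum>b<n l. Q (t - 1) l b j * Q t l b i)))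
              + 1 * (\<Sum>b<n l. layer (grad (x t)) l a b * Q t l b i)) \<and>
          (\<forall>a<m l. \<forall>b<n l. x (Suc t) l a b = x t l a b - \<eta> * (\<Sum>i<r l. M t l a i * Q t l b i)))"
      using assms l unfolding galore_det_mp_def Let_def by blast
    show ?thesis
    proof (cases "m l \<le> n l")
      case True
      with H have M: "\<forall>i<r l. \<forall>b<n l. M t l i b = (\<Sum>a<m l. P t l a i * grad (x t) l a b)"
        and X: "x (Suc t) l a b = x t l a b - \<eta> * (\<Sum>i<r l. P t l a i * M t l i b)"
        using ab by (auto simp: layer_def)
      have "(\<Sum>i<r l. P t l a i * M t l i b) = (\<Sum>i<r l. P t l a i * (\<Sum>a'<m l. P t l a' i * grad (x t) l a' b))"
        using M ab by (intro sum.cong refl) auto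
      thus ?thesis using X True l ab by (simp add: arr_diff_def sc_def proj_in)
    next
      case False
      with H have M: "\<forall>a<m l. \<forall>i<r l. M t l a i = (\<Sum>b<n l. grad (x t) l a b * Q t l b i)"
        and X: "x (Suc t) l a b = x t l a b - \<eta> * (\<Sum>i<r l. M t l a i * Q t l b i)"
        using ab by (auto simp: layer_def)
      have "(\<Sum>i<r l. M t l a i * Q t l b i) = (\<Sum>i<r l. (\<Sum>b'<n l. grad (x t) l a b' * Q t l b' i) * Q t l b i)"
        using M ab by (intro sum.cong refl) auto
      thus ?thesis using X False l ab by (simp add: arr_diff_def sc_def proj_in)
    qed
  next
    case False
    hence "(l, a, b) \<notin> idxs NL m n" by (auto simp: idxs_def)
    thus ?thesis using ps False by (auto simp: pspace_def arr_diff_def sc_def proj_def)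
  qed
qed

lemma galore_orth:
  assumes g: "galore_det_mp NL m n r grad \<eta> \<tau> 1 x P Q M" and r: "\<forall>l<NL. 0 < r l \<and> r l < min (m l) (n l)"
  shows "orthall NL m n r (P t) (Q t)"
proof (induction t)
  case 0
  show ?case unfolding orthall_def
  proof (intro allI impI)
    fix l assume l: "l < NL"
    obtain U S V where svd: "is_svd (m l) (n l) (layer (grad (x 0)) l) U S V"
      and PU: "\<forall>a<m l. \<forall>i<r l. P 0 l a i = U a i" and QV: "\<forall>b<n l. \<forall>i<r l. Q 0 l b i = V b i"
      using galore_svd[OF g l, of 0] by auto
    have "r l \<le> m l" "r l \<le> n l" using r l by auto
    thus "orth (m l) (r l) (P 0 l) \<and> orth (n l) (r l) (Q 0 l)"
      using orth_cong[OF orth_mono[OF svd_orthU[OF svd]] PU] orth_cong[OF orth_mono[OF svd_orthV[OF svd]] QV]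
      by auto
  qed
next
  case (Suc t)
  show ?case unfolding orthall_def
  proof (intro allI impI)
    fix l assume l: "l < NL"
    show "orth (m l) (r l) (P (Suc t) l) \<and> orth (n l) (r l) (Q (Suc t) l)"
    proof (cases "Suc t mod \<tau> = 0")
      case True
      obtain U S V where svd: "is_svd (m l) (n l) (layer (grad (x (Suc t))) l) U S V"
        and PU: "\<forall>a<m l. \<forall>i<r l. P (Suc t) l a i = U a i" and QV: "\<forall>b<n l. \<forall>i<r l. Q (Suc t) l b i = V b i"
        using galore_svd[OF g l True] by auto
      have "r l \<le> m l" "r l \<le> n l" using r l by auto
      thus ?thesis
        using orth_cong[OF orth_mono[OF svd_orthU[OF svd]] PU] orth_cong[OF orth_mono[OF svd_orthV[OF svd]] QV]
        by auto
    next
      case False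
      have K: "(\<forall>a<m l. \<forall>i<r l. P (Suc t) l a i = P t l a i) \<and> (\<forall>b<n l. \<forall>i<r l. Q (Suc t) l b i = Q t l b i)"
        using galore_keep[OF g l False] by simp
      have "orth (m l) (r l) (P t l)" "orth (n l) (r l) (Q t l)" using Suc l unfolding orthall_def by auto
      thus ?thesis using K orth_cong by blast
    qed
  qed
qed

lemma galore_proj_blk:
  assumes g: "galore_det_mp NL m n r grad \<eta> \<tau> 1 x P Q M" and tau: "0 < \<tau>"
  shows "proj NL m n r (P t) (Q t) = proj NL m n r (P (t - t mod \<tau>)) (Q (t - t mod \<tau>))"
proof (induction t)
  case 0 show ?case by simp
next
  case (Suc t)
  show ?case
  proof (cases "Suc t mod \<tau> = 0")
    case True thus ?thesis by simp
  next
    case False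
    have "proj NL m n r (P (Suc t)) (Q (Suc t)) = proj NL m n r (P t) (Q t)"
      using galore_keep[OF g _ False] by (intro proj_cong) auto
    moreover have "Suc t - Suc t mod \<tau> = t - t mod \<tau>"
      using False tau by (simp add: mod_Suc split: if_splits)
    ultimately show ?thesis using Suc by simp
  qed
qed

lemma galore_Nq:
  assumes g: "galore_det_mp NL m n r grad \<eta> \<tau> 1 x P Q M" and r: "\<forall>l<NL. 0 < r l \<and> r l < min (m l) (n l)"
    and t: "t mod \<tau> = 0" and d: "\<forall>l<NL. \<delta> \<le> real (r l) / real (min (m l) (n l))"
  shows "\<delta> * ip NL m n (grad (x t)) (grad (x t)) \<le> Nq NL m n r (P t) (Q t) (grad (x t))"
proof -
  have "(\<Sum>l<NL. \<delta> * (\<Sum>a<m l. \<Sum>b<n l. grad (x t) l a b * grad (x t) l a b)) \<le> Nq NL m n r (P t) (Q t) (grad (x t))"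
  unfolding Nq_def
proof (rule sum_mono)
  fix l assume l: "l \<in> {..<NL}"
  obtain U S V where svd: "is_svd (m l) (n l) (layer (grad (x t)) l) U S V"
    and PU: "\<forall>a<m l. \<forall>i<r l. P t l a i = U a i" and QV: "\<forall>b<n l. \<forall>i<r l. Q t l b i = V b i"
    using galore_svd[OF g _ t, of l] l by auto
  have X: "0 \<le> (\<Sum>a<m l. \<Sum>b<n l. (layer (grad (x t)) l a b)\<^sup>2)" by (intro sum_nonneg) auto
  have "\<delta> * (\<Sum>a<m l. \<Sum>b<n l. grad (x t) l a b * grad (x t) l a b)
      = \<delta> * (\<Sum>a<m l. \<Sum>b<n l. (layer (grad (x t)) l a b)\<^sup>2)" by (simp add: layer_def power2_eq_square)
  also have "\<dots> \<le> real (r l) / real (min (m l) (n l)) * (\<Sum>a<m l. \<Sum>b<n l. (layer (grad (x t)) l a b)\<^sup>2)"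
    using d l X by (intro mult_right_mono) auto
  also have "\<dots> \<le> Nterm (m l) (n l) (r l) (P t l) (Q t l) (layer (grad (x t)) l)"
    using r l by (intro Nterm_svd[OF svd _ _ PU QV]) auto
  finally show "\<delta> * (\<Sum>a<m l. \<Sum>b<n l. grad (x t) l a b * grad (x t) l a b) \<le> Nterm (m l) (n l) (r l) (P t l) (Q t l) (layer (grad (x t)) l)" .
qed
  thus ?thesis by (simp add: ip_nested sum_distrib_left)
qed



lemma l2norm_diff_self[simp]: "l2norm NL m n (arr_diff y y) = 0"
  by (simp add: l2norm_def ip_def arr_diff_def)

lemma delta_facts:
  assumes NL: "0 < NL" and r: "\<forall>l<NL. 0 < r l \<and> r l < min (m l) (n l)"
  shows "0 < delta_min NL m n r" "delta_min NL m n r \<le> 1"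
    "\<forall>l<NL. delta_min NL m n r \<le> real (r l) / real (min (m l) (n l))"
proof -
  let ?A = "(\<lambda>l. real (r l) / real (min (m l) (n l))) ` {..<NL}"
  have fin: "finite ?A" and ne: "?A \<noteq> {}" using NL by auto
  obtain l where l: "l < NL" and dl: "delta_min NL m n r = real (r l) / real (min (m l) (n l))"
    using Min_in[OF fin ne] unfolding delta_min_def by auto
  have "0 < r l" "r l < min (m l) (n l)" using r l by auto
  thus "0 < delta_min NL m n r" "delta_min NL m n r \<le> 1" using dl by auto
  show "\<forall>l<NL. delta_min NL m n r \<le> real (r l) / real (min (m l) (n l))"
    unfolding delta_min_def using fin by (auto intro: Min_le)
qed



lemma eta_consts:
  fixes \<delta> L :: real and \<tau> :: nat
  assumes d: "0 < \<delta>" "\<delta> \<le> 1" and L: "0 < L"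
    and t1: "64 / (3 * \<delta>) \<le> real \<tau>" and t2: "real \<tau> \<le> 64 / (3 * \<delta>) + 1"
    and D: "D = 4 * L + sqrt (80 * L\<^sup>2 / (3 * \<delta> * 1\<^sup>2)) + sqrt (80 * (real \<tau>)\<^sup>2 * L\<^sup>2 / (3 * \<delta>))
                 + sqrt (16 * real \<tau> * L\<^sup>2 / (3 * 1))"
  shows "4 * L \<le> D" "5 * L * real \<tau> \<le> sqrt \<delta> * D" "D \<le> 160 * L / (sqrt \<delta>)^3"
proof -
  define q where "q = sqrt \<delta>"
  have q: "0 < q" "q \<le> 1" "q\<^sup>2 = \<delta>" using d by (auto simp: q_def)
  define A where "A = sqrt (80 * L\<^sup>2 / (3 * \<delta> * 1\<^sup>2))"
  define B where "B = sqrt (80 * (real \<tau>)\<^sup>2 * L\<^sup>2 / (3 * \<delta>))"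
  define C where "C = sqrt (16 * real \<tau> * L\<^sup>2 / (3 * 1))"
  have DD: "D = 4 * L + A + B + C" unfolding D A_def B_def C_def by simp
  have A0: "0 \<le> A" "0 \<le> B" "0 \<le> C" unfolding A_def B_def C_def using d by auto
  show "4 * L \<le> D" using DD A0 by simp
  have tau0: "0 \<le> real \<tau>" by simp
  have "q * B = sqrt (\<delta> * (80 * (real \<tau>)\<^sup>2 * L\<^sup>2 / (3 * \<delta>)))"
    unfolding q_def B_def by (rule real_sqrt_mult[symmetric])
  also have "\<delta> * (80 * (real \<tau>)\<^sup>2 * L\<^sup>2 / (3 * \<delta>)) = 80 / 3 * (L * real \<tau>)\<^sup>2"
    using d by (simp add: field_simps power2_eq_square)
  finally have qB: "q * B = sqrt (80 / 3 * (L * real \<tau>)\<^sup>2)" .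
  have "5 * L * real \<tau> \<le> sqrt (80 / 3 * (L * real \<tau>)\<^sup>2)"
    by (rule real_le_rsqrt) (use L in \<open>simp add: power2_eq_square algebra_simps\<close>)
  also have "\<dots> = q * B" using qB by simp
  also have "\<dots> \<le> q * D" using DD A0 q L by (intro mult_left_mono) auto
  finally show "5 * L * real \<tau> \<le> sqrt \<delta> * D" by (simp add: q_def)
  have tau3: "real \<tau> \<le> 23 / \<delta>"
  proof -
    have "1 \<le> 1 / \<delta>" using d by simp
    hence "64 / (3 * \<delta>) + 1 \<le> 64 / (3 * \<delta>) + 1 / \<delta>" by simp
    also have "\<dots> \<le> 23 / \<delta>" using d by (simp add: field_simps)
    finally show ?thesis using t2 by simp
  qed
  have q3: "q^3 \<le> q" "q ^ 3 \<le> 1" "0 < q^3" using q by (auto simp: power3_eq_cube mult_le_one)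
  have Lq: "L / q \<le> L / q^3" using q q3 L by (intro divide_left_mono) auto
  have Aq: "A \<le> 6 * L / q"
    unfolding A_def
  proof (rule real_le_lsqrt)
    show "0 \<le> 6 * L / q" using L q by simp
    have "(6 * L / q)\<^sup>2 = 36 * L\<^sup>2 / \<delta>" using q by (simp add: power_divide power_mult_distrib)
    moreover have "80 * L\<^sup>2 / (3 * \<delta> * 1\<^sup>2) \<le> 36 * L\<^sup>2 / \<delta>" using d by (simp add: field_simps)
    ultimately show "80 * L\<^sup>2 / (3 * \<delta> * 1\<^sup>2) \<le> (6 * L / q)\<^sup>2" by simp
  qed
  have Bq: "B \<le> 6 * real \<tau> * L / q"
    unfolding B_def
  proof (rule real_le_lsqrt)
    show "0 \<le> 6 * real \<tau> * L / q" using L q by simp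
    have "(6 * real \<tau> * L / q)\<^sup>2 = 36 * (real \<tau>)\<^sup>2 * L\<^sup>2 / \<delta>" using q by (simp add: power_divide power_mult_distrib)
    moreover have "80 * (real \<tau>)\<^sup>2 * L\<^sup>2 / (3 * \<delta>) \<le> 36 * (real \<tau>)\<^sup>2 * L\<^sup>2 / \<delta>" using d by (simp add: field_simps)
    ultimately show "80 * (real \<tau>)\<^sup>2 * L\<^sup>2 / (3 * \<delta>) \<le> (6 * real \<tau> * L / q)\<^sup>2" by simp
  qed
  have Bq2: "6 * real \<tau> * L / q \<le> 138 * L / q^3"
  proof -
    have "6 * real \<tau> * L / q \<le> 6 * (23 / \<delta>) * L / q" using tau3 L q by (intro divide_right_mono mult_right_mono) auto
    also have "\<dots> = 138 * L / q^3" using q by (simp add: power3_eq_cube power2_eq_square[symmetric] field_simps)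
    finally show ?thesis .
  qed
  have Cq: "C \<le> 12 * L / q"
    unfolding C_def
  proof (rule real_le_lsqrt)
    show "0 \<le> 12 * L / q" using L q by simp
    have "(12 * L / q)\<^sup>2 = 144 * L\<^sup>2 / \<delta>" using q by (simp add: power_divide power_mult_distrib)
    moreover have "16 * real \<tau> * L\<^sup>2 / (3 * 1) \<le> 16 * (23 / \<delta>) * L\<^sup>2 / 3"
    proof -
      have "real \<tau> * L\<^sup>2 \<le> (23 / \<delta>) * L\<^sup>2" using tau3 by (intro mult_right_mono) auto
      thus ?thesis by simp
    qed
    moreover have "16 * (23 / \<delta>) * L\<^sup>2 / 3 \<le> 144 * L\<^sup>2 / \<delta>" using d by (simp add: field_simps)
    ultimately show "16 * real \<tau> * L\<^sup>2 / (3 * 1) \<le> (12 * L / q)\<^sup>2" by simp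
  qed
  have L4: "4 * L \<le> 4 * L / q^3" using q3 L by (simp add: field_simps)
  have "D \<le> 4 * L / q^3 + 6 * L / q^3 + 138 * L / q^3 + 12 * L / q^3"
  proof -
    have A6: "6 * L / q \<le> 6 * L / q^3"
    proof -
      have "6 * (L / q) \<le> 6 * (L / q^3)" using Lq by simp
      thus ?thesis by simp
    qed
    have C12: "12 * L / q \<le> 12 * L / q^3"
    proof -
      have "12 * (L / q) \<le> 12 * (L / q^3)" using Lq by simp
      thus ?thesis by simp
    qed
    show ?thesis using DD Aq Bq Bq2 Cq L4 A6 C12 by linarith
  qed
  also have "\<dots> = 160 * L / q^3" by (simp add: field_simps)
  finally show "D \<le> 160 * L / (sqrt \<delta>)^3" by (simp add: q_def)
qed



lemma main:
  assumes NL: "0 < NL" and r: "\<forall>l<NL. 0 < r l \<and> r l < min (m l) (n l)"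
    and bdd: "bdd_below (f ` pspace NL m n)"
    and grad: "\<forall>y\<in>pspace NL m n. has_grad NL m n f (grad y) y"
    and lip: "\<forall>y\<in>pspace NL m n. \<forall>z\<in>pspace NL m n.
        l2norm NL m n (arr_diff (grad y) (grad z)) \<le> L * l2norm NL m n (arr_diff y z)"
    and Deltapos: "0 < f (x 0) - Inf (f ` pspace NL m n)"
    and T: "64 / (3 * delta_min NL m n r) \<le> real T"
    and g: "galore_det_mp NL m n r grad \<eta> \<tau> 1 x P Q M"
    and tau_def: "\<tau> = nat \<lceil>64 / (3 * delta_min NL m n r * 1)\<rceil>"
    and eta_def: "\<eta> = 1 / (4 * L + sqrt (80 * L\<^sup>2 / (3 * delta_min NL m n r * 1\<^sup>2))
                 + sqrt (80 * (real \<tau>)\<^sup>2 * L\<^sup>2 / (3 * delta_min NL m n r))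
                 + sqrt (16 * real \<tau> * L\<^sup>2 / (3 * 1)))"
  shows "(1 / real T) * (\<Sum>t<T. (l2norm NL m n (grad (x t)))\<^sup>2)
      \<le> 1280 * (L * (f (x 0) - Inf (f ` pspace NL m n)) / (delta_min NL m n r powr (5/2) * real T))"
proof -
  define \<delta> where "\<delta> = delta_min NL m n r"
  define \<Delta> where "\<Delta> = f (x 0) - Inf (f ` pspace NL m n)"
  have d: "0 < \<delta>" "\<delta> \<le> 1" "\<forall>l<NL. \<delta> \<le> real (r l) / real (min (m l) (n l))"
    using delta_facts[OF NL r] unfolding \<delta>_def by auto
  have xs: "\<forall>t. x t \<in> pspace NL m n" using g unfolding galore_det_mp_def by auto
  have gs: "\<And>y. y \<in> pspace NL m n \<Longrightarrow> grad y \<in> pspace NL m n" using grad unfolding has_grad_def by auto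
  have Tpos: "0 < real T"
  proof -
    have "0 < 64 / (3 * \<delta>)" using d by simp
    thus ?thesis using T unfolding \<delta>_def by linarith
  qed
  show ?thesis
  proof (cases "L > 0")
    case False
    have Lnn: "0 \<le> L"
    proof (rule ccontr)
      assume "\<not> 0 \<le> L"
      define e :: arr where "e = (\<lambda>l a b. if l = 0 \<and> a = 0 \<and> b = 0 then 1 else 0)"
      define z :: arr where "z = (\<lambda>l a b. 0)"
      have r0: "0 < m 0" "0 < n 0" using r NL by auto
      have e: "e \<in> pspace NL m n" using NL r0 by (auto simp: e_def pspace_def idxs_def)
      have z: "z \<in> pspace NL m n" by (simp add: z_def pspace_def)
      have "l2norm NL m n e \<noteq> 0"
      proof
        assume "l2norm NL m n e = 0"
        from l2norm_zero_pspace[OF e this] have "e 0 0 0 = 0" by simp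
        thus False by (simp add: e_def)
      qed
      moreover have "arr_diff e z = e" by (simp add: z_def arr_diff_def)
      ultimately have epos: "0 < l2norm NL m n (arr_diff e z)" using l2norm_nonneg[of NL m n e]
        by (metis less_eq_real_def)
      have "l2norm NL m n (arr_diff (grad e) (grad z)) \<le> L * l2norm NL m n (arr_diff e z)"
        using lip e z by blast
      moreover have "L * l2norm NL m n (arr_diff e z) < 0" using epos \<open>\<not> 0 \<le> L\<close> by (simp add: mult_neg_pos)
      ultimately show False using l2norm_nonneg[of NL m n "arr_diff (grad e) (grad z)"] by linarith
    qed
    hence L0: "L = 0" using False by simp
    have zero: "\<forall>t. l2norm NL m n (grad (x t)) = 0"
    proof (intro allI, rule ccontr)
      fix t assume ne: "l2norm NL m n (grad (x t)) \<noteq> 0"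
      define G where "G = grad (x t)"
      define N where "N = l2norm NL m n G"
      have N: "0 < N" using ne l2norm_nonneg[of NL m n G] unfolding N_def G_def by linarith
      define I where "I = Inf (f ` pspace NL m n)"
      define s where "s = (f (x t) - I + 1) / N\<^sup>2"
      define y where "y = arr_diff (x t) (sc s G)"
      have G: "G \<in> pspace NL m n" unfolding G_def using gs xs by blast
      have y: "y \<in> pspace NL m n" unfolding y_def using xs G by (intro pspace_diff pspace_sc) auto
      have yx: "arr_diff y (x t) = sc (- s) G" by (simp add: y_def arr_diff_def sc_def fun_eq_iff)
      have "f y \<le> f (x t) + ip NL m n (grad (x t)) (arr_diff y (x t)) + L / 2 * (l2norm NL m n (arr_diff y (x t)))\<^sup>2"
        using descent[OF grad lip] xs y by blast
      also have "\<dots> = f (x t) - s * N\<^sup>2"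
        using L0 by (simp add: yx ip_sc_right G_def[symmetric] N_def l2norm_sq)
      also have "\<dots> = I - 1" using N by (simp add: s_def)
      finally have "f y \<le> I - 1" .
      moreover have "I \<le> f y" unfolding I_def using bdd y by (intro cInf_lower) auto
      ultimately show False by simp
    qed
    thus ?thesis using L0 by simp
  next
    case True
    hence L: "0 < L" .
    define q where "q = sqrt \<delta>"
    have q: "0 < q" "q \<le> 1" "q\<^sup>2 = \<delta>" using d by (auto simp: q_def)
    have tpos: "0 < \<tau>" using d unfolding tau_def \<delta>_def[symmetric] by simp
    have t1: "64 / (3 * \<delta>) \<le> real \<tau>" unfolding tau_def \<delta>_def[symmetric] using real_nat_ceiling_ge by simp
    have t2: "real \<tau> \<le> 64 / (3 * \<delta>) + 1"
    proof -
      have "0 \<le> 64 / (3 * \<delta>)" using d by simp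
      hence "real \<tau> = real_of_int \<lceil>64 / (3 * \<delta>)\<rceil>" unfolding tau_def \<delta>_def[symmetric] by simp
      thus ?thesis by linarith
    qed
    define D where "D = 4 * L + sqrt (80 * L\<^sup>2 / (3 * \<delta> * 1\<^sup>2))
                 + sqrt (80 * (real \<tau>)\<^sup>2 * L\<^sup>2 / (3 * \<delta>))
                 + sqrt (16 * real \<tau> * L\<^sup>2 / (3 * 1))"
    note C = eta_consts[OF d(1,2) L t1 t2 D_def]
    have eta: "\<eta> = 1 / D" unfolding eta_def D_def \<delta>_def by simp
    have Dpos: "0 < D" using C(1) L by linarith
    have etapos: "0 < \<eta>" using eta Dpos by simp
    have Le: "L * \<eta> \<le> 1 / 4" using C(1) Dpos L by (simp add: eta field_simps)
    have Let: "L * \<eta> * real \<tau> \<le> q / 5" using C(2) Dpos L by (simp add: eta field_simps q_def)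
    define Pi where "Pi = (\<lambda>t. proj NL m n r (P t) (Q t))"
    define G where "G = (\<lambda>t. grad (x t))"
    define gn where "gn = (\<lambda>t. l2norm NL m n (G t))"
    define p where "p = (\<lambda>t. l2norm NL m n (Pi t (G t)))"
    define F where "F = (\<lambda>t. f (x t))"
    have Gs: "\<And>t. G t \<in> pspace NL m n" unfolding G_def using gs xs by blast
    have orth: "\<And>t. orthall NL m n r (P t) (Q t)" using galore_orth[OF g r] by blast
    have step: "\<And>t. arr_diff (x (Suc t)) (x t) = sc (- \<eta>) (Pi t (G t))"
      using galore_step[OF g] by (simp add: Pi_def G_def arr_diff_def sc_def fun_eq_iff)
    have pn: "\<And>t. (p t)\<^sup>2 = ip NL m n (G t) (Pi t (G t))" unfolding p_def Pi_def using orth by (simp add: proj_norm_sq)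
    have ple: "\<And>t. p t \<le> gn t" unfolding p_def gn_def Pi_def using orth by (simp add: proj_le)
    have desc: "\<forall>t. F (Suc t) \<le> F t - \<eta> * (p t)\<^sup>2 + L * \<eta>\<^sup>2 / 2 * (p t)\<^sup>2"
    proof
      fix t
      have "F (Suc t) \<le> F t + ip NL m n (G t) (arr_diff (x (Suc t)) (x t)) + L / 2 * (l2norm NL m n (arr_diff (x (Suc t)) (x t)))\<^sup>2"
        unfolding F_def G_def using descent[OF grad lip] xs by blast
      also have "\<dots> = F t - \<eta> * (p t)\<^sup>2 + L * \<eta>\<^sup>2 / 2 * (p t)\<^sup>2"
        using etapos by (simp add: step ip_sc_right pn[symmetric] l2norm_sc p_def power_mult_distrib)
      finally show "F (Suc t) \<le> F t - \<eta> * (p t)\<^sup>2 + L * \<eta>\<^sup>2 / 2 * (p t)\<^sup>2" .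
    qed
    have dist: "\<And>s k. l2norm NL m n (arr_diff (x (s + k)) (x s)) \<le> \<eta> * (\<Sum>v\<in>{s..<s+k}. gn v)"
    proof -
      fix s k show "l2norm NL m n (arr_diff (x (s + k)) (x s)) \<le> \<eta> * (\<Sum>v\<in>{s..<s+k}. gn v)"
      proof (induction k)
        case 0 show ?case by simp
      next
        case (Suc k)
        have "l2norm NL m n (arr_diff (x (s + Suc k)) (x s))
            \<le> l2norm NL m n (arr_diff (x (Suc (s + k))) (x (s + k))) + l2norm NL m n (arr_diff (x (s + k)) (x s))"
          using l2norm_diff_tri by simp
        also have "l2norm NL m n (arr_diff (x (Suc (s + k))) (x (s + k))) = \<eta> * p (s + k)"
          using etapos by (simp add: step l2norm_sc p_def)
        also have "\<dots> \<le> \<eta> * gn (s + k)" using ple etapos by (intro mult_left_mono) auto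
        finally have "l2norm NL m n (arr_diff (x (s + Suc k)) (x s)) \<le> \<eta> * gn (s + k) + \<eta> * (\<Sum>v\<in>{s..<s+k}. gn v)"
          using Suc by linarith
        thus ?case by (simp add: algebra_simps)
      qed
    qed
    have blk: "\<forall>t. q * gn (t - t mod \<tau>) - L * \<eta> * (\<Sum>v\<in>{t - t mod \<tau>..<t}. gn v) \<le> p t \<and>
                 gn t \<le> gn (t - t mod \<tau>) + L * \<eta> * (\<Sum>v\<in>{t - t mod \<tau>..<t}. gn v)"
    proof
      fix t
      define s where "s = t - t mod \<tau>"
      have smod: "s mod \<tau> = 0" unfolding s_def by (simp add: minus_mod_eq_mult_div)
      have st: "t = s + (t - s)" unfolding s_def by simp
      have Pis: "Pi t = Pi s" unfolding Pi_def s_def by (rule galore_proj_blk[OF g tpos])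
      have dG: "l2norm NL m n (arr_diff (G t) (G s)) \<le> L * \<eta> * (\<Sum>v\<in>{s..<t}. gn v)"
      proof -
        have "l2norm NL m n (arr_diff (G t) (G s)) \<le> L * l2norm NL m n (arr_diff (x t) (x s))"
          unfolding G_def using lip xs by blast
        also have "\<dots> \<le> L * (\<eta> * (\<Sum>v\<in>{s..<s + (t - s)}. gn v))"
          using dist[of s "t - s"] st L by (intro mult_left_mono) auto
        finally show ?thesis using st by (simp add: mult.assoc)
      qed
      have ps: "q * gn s \<le> p s"
      proof -
        have "\<delta> * ip NL m n (G s) (G s) \<le> Nq NL m n r (P s) (Q s) (G s)"
          unfolding G_def by (rule galore_Nq[OF g r smod d(3)])
        hence "\<delta> * (gn s)\<^sup>2 \<le> (p s)\<^sup>2" by (simp add: gn_def l2norm_sq pn proj_ip Pi_def)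
        hence "sqrt (\<delta> * (gn s)\<^sup>2) \<le> sqrt ((p s)\<^sup>2)" by (rule real_sqrt_le_mono)
        thus ?thesis using d by (simp add: real_sqrt_mult q_def gn_def p_def)
      qed
      have "p s - l2norm NL m n (arr_diff (Pi s (G s)) (Pi s (G t))) \<le> p t"
        using l2norm_sub_ge[of NL m n "Pi s (G s)" "Pi s (G t)"] Pis by (simp add: p_def)
      moreover have "l2norm NL m n (arr_diff (Pi s (G s)) (Pi s (G t))) \<le> l2norm NL m n (arr_diff (G t) (G s))"
        using proj_le[OF orth, of s "arr_diff (G s) (G t)"] l2norm_diff_comm[of NL m n "G s" "G t"]
        by (simp add: Pi_def proj_diff)
      ultimately have A: "q * gn s - L * \<eta> * (\<Sum>v\<in>{s..<t}. gn v) \<le> p t" using ps dG by linarith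
      have "gn t - l2norm NL m n (arr_diff (G t) (G s)) \<le> gn s"
        using l2norm_sub_ge[of NL m n "G t" "G s"] by (simp add: gn_def)
      hence B: "gn t \<le> gn s + L * \<eta> * (\<Sum>v\<in>{s..<t}. gn v)" using dG by linarith
      show "q * gn (t - t mod \<tau>) - L * \<eta> * (\<Sum>v\<in>{t - t mod \<tau>..<t}. gn v) \<le> p t \<and>
                 gn t \<le> gn (t - t mod \<tau>) + L * \<eta> * (\<Sum>v\<in>{t - t mod \<tau>..<t}. gn v)"
        using A B unfolding s_def by simp
    qed
    have g0: "\<forall>t. 0 \<le> gn t" by (simp add: gn_def)
    have p0: "\<forall>t. 0 \<le> p t" by (simp add: p_def)
    have each: "\<forall>t. \<eta> * q\<^sup>2 / 8 * (gn t)\<^sup>2 \<le> F t - F (Suc t)"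
      using numeric_step[OF etapos L Le Let q(1,2) tpos g0 p0 desc blk] by blast
    have sumF: "(\<Sum>t<T. \<eta> * q\<^sup>2 / 8 * (gn t)\<^sup>2) \<le> F 0 - F T" by (rule telescope[OF each])
    have FT: "Inf (f ` pspace NL m n) \<le> F T" unfolding F_def using bdd xs by (intro cInf_lower) auto
    have S1: "\<eta> * q\<^sup>2 / 8 * (\<Sum>t<T. (gn t)\<^sup>2) \<le> \<Delta>"
      using sumF FT unfolding \<Delta>_def F_def by (simp add: sum_distrib_left)
    have Dl: "0 < \<Delta>" using Deltapos unfolding \<Delta>_def by simp
    have S2: "(\<Sum>t<T. (gn t)\<^sup>2) \<le> 8 * \<Delta> * D / q\<^sup>2"
    proof -
      have "(\<Sum>t<T. (gn t)\<^sup>2) = (\<eta> * q\<^sup>2 / 8 * (\<Sum>t<T. (gn t)\<^sup>2)) * (8 * D / q\<^sup>2)"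
        using q(1) Dpos by (simp add: eta field_simps)
      also have "\<dots> \<le> \<Delta> * (8 * D / q\<^sup>2)" using S1 q Dpos by (intro mult_right_mono) auto
      also have "\<dots> = 8 * \<Delta> * D / q\<^sup>2" by simp
      finally show ?thesis .
    qed
    have S3: "8 * \<Delta> * D / q\<^sup>2 \<le> 8 * \<Delta> * (160 * L / q^3) / q\<^sup>2"
      using C(3) Dl q unfolding q_def[symmetric] by (intro divide_right_mono mult_left_mono) auto
    have S4: "8 * \<Delta> * (160 * L / q^3) / q\<^sup>2 = 1280 * (L * \<Delta> / q^5)"
      using q by (simp add: field_simps power2_eq_square power3_eq_cube eval_nat_numeral)
    have pw: "\<delta> powr (5/2) = q ^ 5"
      using d by (simp add: powr_half_sqrt_powr q_def real_sqrt_power)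
    have "(1 / real T) * (\<Sum>t<T. (gn t)\<^sup>2) \<le> (1 / real T) * (1280 * (L * \<Delta> / q^5))"
      using S2 S3 S4 Tpos by (intro mult_left_mono) (auto simp: mult.commute)
    also have "\<dots> = 1280 * (L * \<Delta> / (\<delta> powr (5/2) * real T))" using pw by simp
    finally show ?thesis unfolding gn_def G_def \<Delta>_def \<delta>_def .
  qed
qed

theorem theorem2:
  shows "\<exists>C::real. \<forall>(NL::nat) (m::nat \<Rightarrow> nat) (n::nat \<Rightarrow> nat) (r::nat \<Rightarrow> nat)
      (f::arr \<Rightarrow> real) (grad::arr \<Rightarrow> arr) (L::real) (T::nat)
      (x::nat \<Rightarrow> arr) (P::nat \<Rightarrow> nat \<Rightarrow> matr) (Q::nat \<Rightarrow> nat \<Rightarrow> matr) (M::nat \<Rightarrow> nat \<Rightarrow> matr).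
    let \<delta> = delta_min NL m n r;
        \<beta>\<^sub>1 = (1::real);
        \<tau> = nat \<lceil>64 / (3 * \<delta> * \<beta>\<^sub>1)\<rceil>;
        \<eta> = 1 / (4 * L + sqrt (80 * L\<^sup>2 / (3 * \<delta> * \<beta>\<^sub>1\<^sup>2))
                 + sqrt (80 * (real \<tau>)\<^sup>2 * L\<^sup>2 / (3 * \<delta>))
                 + sqrt (16 * real \<tau> * L\<^sup>2 / (3 * \<beta>\<^sub>1)));
        \<Delta> = f (x 0) - Inf (f ` pspace NL m n)
    in
    (0 < NL \<and>
     (\<forall>l<NL. 0 < r l \<and> r l < min (m l) (n l)) \<and>
     bdd_below (f ` pspace NL m n) \<and>
     (\<forall>y\<in>pspace NL m n. has_grad NL m n f (grad y) y) \<and>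
     (\<forall>y\<in>pspace NL m n. \<forall>z\<in>pspace NL m n.
        l2norm NL m n (arr_diff (grad y) (grad z)) \<le> L * l2norm NL m n (arr_diff y z)) \<and>
     0 < \<Delta> \<and>
     real T \<ge> 64 / (3 * \<delta>) \<and>
     galore_det_mp NL m n r grad \<eta> \<tau> \<beta>\<^sub>1 x P Q M)
    \<longrightarrow>
    (1 / real T) * (\<Sum>t<T. (l2norm NL m n (grad (x t)))\<^sup>2)
      \<le> C * (L * \<Delta> / (\<delta> powr (5/2) * real T))"
  apply (intro exI[of _ 1280] allI)
  apply (unfold Let_def)
  apply (intro impI)
  apply (elim conjE)
  apply (rule main)
  apply (assumption | rule refl)+
  done

end
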